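(* Let $K$ be an algebraically closed field of characteristic three, and let $C_3^2 = C_3\times C_3$. For any injective group homomorphism $\iota\colon C_3^2\to \mathrm{SL}(3,K)$ whose image is small, there exist $a\in K\setminus\mathbb F_3$ and $b\in K$ such that $\sigma(U(a,b))$ is conjugate in $\mathrm{GL}(3,K)$ to $\iota(C_3^2)$. Here $U(a,b)$ is the subgroup of the additive group $(K^2,+)$ generated by $(1,0)$ and $(a,b)$, and $\sigma\colon (K^2,+)\to \mathrm{SL}(3,K)$ is the group homomorphism $$\sigma(c_1,c_2)=\begin{pmatrix}1&-c_1&c_1^2+c_2\\0&1&c_1\\0&0&1\end{pmatrix}.$$
   Context: A subgroup $G\subset\mathrm{GL}(n,K)$ acts on $K^n$; an element $g\in G$ is a pseudo-reflection if its fixed subspace $(K^n)^g$ has dimension $n-1$. The group $G$ is called small if it contains no pseudo-reflection. $\mathbb F_3\subset K$ denotes the prime field. *)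

theory Defs
  imports "HOL-Analysis.Analysis" "HOL-Computational_Algebra.Polynomial" "HOL-Library.Numeral_Type"
begin

text \<open>The cyclic group C3 is the additive group of the numeral type 3 (integers mod 3);
  C3^2 is the additive group of the product type 3 \<times> 3. Matrices are 'a^3^3.\<close>

definition SL3 :: "(('a::field)^3^3) set" where
  "SL3 = {A. det A = 1}"

definition GL3 :: "(('a::field)^3^3) set" where
  "GL3 = {A. invertible A}"

definition fixed_space :: "('a::field)^3^3 \<Rightarrow> ('a^3) set" where
  "fixed_space g = {v. g *v v = v}"

definition pseudo_reflection :: "('a::field)^3^3 \<Rightarrow> bool" where
  "pseudo_reflection g \<longleftrightarrow> vec.dim (fixed_space g) = 3 - 1"

definition small :: "(('a::field)^3^3) set \<Rightarrow> bool" where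
  "small G \<longleftrightarrow> (\<forall>g\<in>G. \<not> pseudo_reflection g)"

definition prime_subfield :: "('a::field) set" where
  "prime_subfield = range of_int"

definition U :: "'a::field \<Rightarrow> 'a \<Rightarrow> ('a \<times> 'a) set" where
  "U a b = {(of_int i + of_int j * a, of_int j * b) | i j. True}"

definition sigma :: "('a::field) \<times> 'a \<Rightarrow> 'a^3^3" where
  "sigma c = (case c of (c1, c2) \<Rightarrow>
     vector [vector [1, - c1, c1^2 + c2],
             vector [0, 1, c1],
             vector [0, 0, 1]])"

definition conjugate_in_GL3 :: "(('a::field)^3^3) set \<Rightarrow> ('a^3^3) set \<Rightarrow> bool" where
  "conjugate_in_GL3 G H \<longleftrightarrow>
     (\<exists>P \<in> GL3. (\<lambda>M. matrix_inv P ** M ** P) ` G = H)"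

end

theory Submission imports Defs begin


lemma inv_props:
  fixes P :: "'a::field^'n^'n"
  assumes "invertible P"
  shows "P ** matrix_inv P = mat 1" "matrix_inv P ** P = mat 1"
proof -
  have "\<exists>A'. P ** A' = mat 1 \<and> A' ** P = mat 1" using assms unfolding invertible_def by blast
  hence "P ** matrix_inv P = mat 1 \<and> matrix_inv P ** P = mat 1"
    unfolding matrix_inv_def by (rule someI_ex)
  thus "P ** matrix_inv P = mat 1" "matrix_inv P ** P = mat 1" by auto
qed

lemma inv_inv:
  fixes P :: "'a::field^'n^'n"
  assumes "invertible P"
  shows "invertible (matrix_inv P)" "matrix_inv (matrix_inv P) = P"
proof -
  show i: "invertible (matrix_inv P)" unfolding invertible_def using inv_props[OF assms] by blast
  have "matrix_inv (matrix_inv P) = matrix_inv (matrix_inv P) ** (matrix_inv P ** P)"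
    using inv_props[OF assms] by simp
  also have "\<dots> = P" using inv_props[OF i] by (simp add: matrix_mul_assoc)
  finally show "matrix_inv (matrix_inv P) = P" .
qed

lemma char3:
  assumes "CHAR('a::field) = 3"
  shows "(3::'a) = 0"
  using of_nat_CHAR[where 'a='a] assms by simp

lemma kerdim:
  fixes A :: "'a::field^3^3"
  assumes "A \<noteq> 0" "A ** A = 0"
  shows "vec.dim {x. A *v x = 0} = 2"
proof -
  define K where "K = {x. A *v x = 0}"
  have subK: "vec.subspace K" unfolding K_def vec.subspace_def
    by (simp add: matrix_vector_right_distrib vector_scalar_commute)
  obtain u where u: "A *v u \<noteq> 0" using assms(1) matrix_eq[of A 0] by auto
  define w where "w = A *v u"
  have wK: "w \<in> K" unfolding K_def w_def using assms(2)
    by (simp add: matrix_vector_mul_assoc)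
  have uK: "u \<notin> K" using u unfolding K_def by simp
  have spK: "vec.span K = K" using subK by (simp add: vec.span_eq_iff)
  have dimU: "vec.dim (UNIV::('a^3) set) = 3" using vec_dim_card[where 'a='a and 'n=3] by simp
  have le3: "vec.dim K \<le> 3" using vec.dim_subset[of K UNIV] dimU by simp
  have ne3: "vec.dim K \<noteq> 3"
  proof
    assume "vec.dim K = 3"
    hence "vec.span K = vec.span UNIV" using vec.dim_eq_span[of K UNIV] dimU by simp
    hence "vec.span K = UNIV" by simp
    thus False using spK uK by auto
  qed
  have ge2: "\<not> vec.dim K \<le> 1"
  proof
    assume d1: "vec.dim K \<le> 1"
    have w0: "w \<noteq> 0" using u w_def by simp
    have "vec.span {w} = vec.span K"
      by (rule vec.dim_eq_span) (use wK d1 w0 in auto)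
    hence Kw: "K = range (\<lambda>k. k *s w)" using spK vec.span_singleton[of w] by simp
    have sumU: "{x + y |x y. x \<in> K \<and> y \<in> vec.span {u}} = UNIV"
    proof (auto)
      fix x
      have "A *v x \<in> K" unfolding K_def using assms(2) by (simp add: matrix_vector_mul_assoc)
      then obtain c where c: "A *v x = c *s w" using Kw by auto
      have "x - c *s u \<in> K" unfolding K_def using c w_def
        by (simp add: matrix_vector_mult_diff_distrib vector_scalar_commute)
      moreover have "c *s u \<in> vec.span {u}" unfolding vec.span_singleton by (rule range_eqI) (rule refl)
      ultimately show "\<exists>a b. x = a + b \<and> a \<in> K \<and> b \<in> vec.span {u}"
        by (metis diff_add_cancel)
    qed
    have inter: "K \<inter> vec.span {u} = {0}"
    proof auto
      show "0 \<in> K" unfolding K_def by simp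
      show "0 \<in> vec.span {u}" by (simp add: vec.span_zero)
    next
      fix x assume "x \<in> K" "x \<in> vec.span {u}"
      then obtain c where "x = c *s u" "A *v (c *s u) = 0" unfolding K_def vec.span_singleton by auto
      hence "c *s w = 0" unfolding w_def by (simp add: vector_scalar_commute)
      hence "c = 0" using w0 by simp
      thus "x = 0" using \<open>x = c *s u\<close> by simp
    qed
    have u0: "u \<noteq> 0" using u by auto
    have "vec.dim {x + y |x y. x \<in> K \<and> y \<in> vec.span {u}} + vec.dim (K \<inter> vec.span {u})
        = vec.dim K + vec.dim (vec.span {u})"
      by (rule vec.dim_sums_Int[OF subK vec.subspace_span])
    hence "3 + 0 = vec.dim K + 1" unfolding sumU inter using u0 dimU
      by (simp add: vec.dim_span)
    thus False using d1 by simp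
  qed
  show ?thesis using le3 ne3 ge2 unfolding K_def by linarith
qed



lemma three_zero:
  assumes "CHAR('a::field) = 3"
  shows "(x::'a) + x + x = 0"
proof -
  have "(3::'a) = 0" using of_nat_CHAR[where 'a='a] assms by simp
  hence "3 * x = 0" by simp
  thus ?thesis by (simp add: algebra_simps)
qed

lemma cube_one:
  assumes "CHAR('a::field) = 3" "(x::'a)^3 = 1"
  shows "x = 1"
proof -
  have t: "(3::'a) = 0" using of_nat_CHAR[where 'a='a] assms by simp
  have "(x - 1)^3 = x^3 - 1 - 3 * (x^2 - x)" by (simp add: power3_eq_cube power2_eq_square algebra_simps)
  also have "\<dots> = 0" using t assms(2) by simp
  finally show ?thesis by simp
qed

lemma three3: "(a::3) + a + a = 0"
proof -
  have "(a::3) + a + a = (1 + 1 + 1) * a" by (simp add: ring_distribs)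
  also have "(1 + 1 + 1 :: 3) = 0" by simp
  finally show ?thesis by simp
qed

lemma three3': "3 * (a::3) = 0"
  using three3[of a] by simp

lemma prod3_three: "(x::3\<times>3) + x + x = 0"
  by (cases x) (simp add: zero_prod_def three3')

lemma sigma_mult:
  assumes "CHAR('a::field) = 3"
  shows "sigma (a1::'a, b1) ** sigma (a2, b2) = sigma (a1 + a2, b1 + b2)"
proof -
  have t: "(3::'a) = 0" using of_nat_CHAR[where 'a='a] assms by simp
  have e: "a1 * a2 * 3 = 0" using t by simp
  show ?thesis
  unfolding sigma_def
  apply (simp add: vec_eq_iff forall_3 matrix_matrix_mult_def sum_3)
  using e by (simp add: power2_eq_square algebra_simps)
qed

lemma sigma_inj:
  "sigma (a1::'a::field, b1) = sigma (a2, b2) \<Longrightarrow> a1 = a2 \<and> b1 = b2"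
proof -
  assume h: "sigma (a1, b1) = sigma (a2, b2)"
  have "sigma (a1, b1) $2$3 = sigma (a2, b2) $2$3" "sigma (a1, b1) $1$3 = sigma (a2, b2) $1$3"
    using h by auto
  thus ?thesis unfolding sigma_def by simp
qed

lemma comm_sigma:
  fixes M :: "'a::field^3^3"
  assumes c: "CHAR('a) = 3" and cm: "M ** (sigma (1,0) - mat 1) = (sigma (1,0) - mat 1) ** M"
    and d: "det M = 1"
  shows "M = sigma (M$2$3, M$1$3 - (M$2$3)^2)"
proof -
  have q: "\<And>i j. (M ** (sigma (1,0) - mat 1))$i$j = ((sigma (1,0) - mat 1) ** M)$i$j"
    using cm by simp
  have e: "M $ 3 $ 1 = 0" "M $ 1 $ 1 = M $ 3 $ 3" "M $ 1 $ 2 = - M $ 2 $ 3"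
     "M $ 2 $ 1 = 0" "M $ 3 $ 2 = 0" "M $ 2 $ 2 = M $ 3 $ 3"
    using q[of 1 1] q[of 1 2] q[of 1 3] q[of 2 1] q[of 2 2] q[of 2 3] q[of 3 1] q[of 3 2] q[of 3 3]
    unfolding sigma_def by (simp_all add: matrix_matrix_mult_def sum_3 mat_def)
  have "(M$3$3)^3 = 1" using d e unfolding det_3 by (simp add: power3_eq_cube)
  hence "M$3$3 = 1" using cube_one c by blast
  thus ?thesis using e unfolding sigma_def by (simp add: vec_eq_iff forall_3)
qed


lemma msub_r: fixes A B :: "'a::ring_1^'n^'m" shows "(A - B) ** C = A ** C - B ** C"
  by (simp add: vec_eq_iff matrix_matrix_mult_def sum_subtractf algebra_simps)

lemma msub_l: fixes A B :: "'a::ring_1^'n^'m" shows "C ** (A - B) = C ** A - C ** B"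
  by (simp add: vec_eq_iff matrix_matrix_mult_def sum_subtractf algebra_simps)

lemma madd_r: fixes A B :: "'a::ring_1^'n^'m" shows "(A + B) ** C = A ** C + B ** C"
  by (simp add: vec_eq_iff matrix_matrix_mult_def sum.distrib algebra_simps)

lemma mthree: assumes "CHAR('a::field) = 3" shows "(X::'a^'n^'m) + X + X = 0"
  using three_zero[OF assms] by (simp add: vec_eq_iff)

lemma mthree': assumes "CHAR('a::field) = 3" shows "3 * (X::'a^'n^'m) = 0"
  using mthree[OF assms, of X] by simp

lemma cube_nil:
  fixes g :: "'a::field^'n^'n"
  assumes c: "CHAR('a) = 3" and g: "g ** g ** g = mat 1"
  shows "(g - mat 1) ** (g - mat 1) ** (g - mat 1) = 0"
proof -
  define N where "N = g - mat 1"
  have gN: "g = N + mat 1" unfolding N_def by simp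
  have "g ** g ** g = N**N**N + (N**N + N**N + N**N) + (N + N + N) + mat 1"
    unfolding gN by (simp only: matrix_add_ldistrib madd_r matrix_mul_lid matrix_mul_rid add_ac)
  hence "g ** g ** g = N**N**N + mat 1" using mthree[OF c, of "N ** N"] mthree[OF c, of N]
    by (simp only: add.assoc[symmetric]) (simp add: add.assoc)
  hence "N**N**N = 0" using g by simp
  thus ?thesis unfolding N_def .
qed

lemma add_of_int:
  fixes \<phi> :: "3 \<Rightarrow> 'a::ring_1"
  assumes h: "\<And>s t. \<phi> (s + t) = \<phi> s + \<phi> t"
  shows "\<phi> (of_int k) = of_int k * \<phi> 1"
proof -
  have z: "\<phi> 0 = 0" using h[of 0 0] by simp
  show ?thesis
  proof (induct k rule: int_induct[where k=0])
    case base then show ?case using z by simp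
  next
    case (step1 i)
    have "\<phi> (of_int (i + 1)) = \<phi> (of_int i + 1)" by simp
    also have "\<dots> = \<phi> (of_int i) + \<phi> 1" by (rule h)
    finally show ?case using step1 by (simp add: algebra_simps)
  next
    case (step2 i)
    have "\<phi> (of_int i) = \<phi> (of_int (i - 1) + 1)" by simp
    also have "\<dots> = \<phi> (of_int (i - 1)) + \<phi> 1" by (rule h)
    finally show ?case using step2 by (simp add: algebra_simps)
  qed
qed

lemma three_of_int: "\<exists>k. (s::3) = of_int k"
  by (cases s) auto
theorem proposition3p1:
  fixes \<iota> :: "3 \<times> 3 \<Rightarrow> ('a::alg_closed_field)^3^3"
  assumes "CHAR('a) = 3"
    and hom: "\<forall>x y. \<iota> (x + y) = \<iota> x ** \<iota> y"
    and inj: "inj \<iota>"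
    and SL: "range \<iota> \<subseteq> SL3"
    and sm: "small (range \<iota>)"
  shows "\<exists>a b. a \<notin> prime_subfield \<and> conjugate_in_GL3 (sigma ` U a b) (range \<iota>)"
proof -
  have c3: "CHAR('a) = 3" using assms(1) .
  have det1: "\<And>x. det (\<iota> x) = 1" using SL unfolding SL3_def by auto
  have invi: "\<And>x. invertible (\<iota> x)" by (simp add: invertible_det_nz det1)
  have i0: "\<iota> 0 = mat 1"
  proof -
    have "\<iota> 0 = \<iota> 0 ** \<iota> 0" using hom by (metis add_0)
    hence "matrix_inv (\<iota> 0) ** \<iota> 0 = matrix_inv (\<iota> 0) ** (\<iota> 0 ** \<iota> 0)" by simp
    thus ?thesis using inv_props(2)[OF invi] by (simp add: matrix_mul_assoc)
  qed
  have cube: "\<And>x. \<iota> x ** \<iota> x ** \<iota> x = mat 1"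
  proof -
    fix x
    have "\<iota> (x + x + x) = \<iota> x ** \<iota> x ** \<iota> x" by (simp only: hom[rule_format])
    thus "\<iota> x ** \<iota> x ** \<iota> x = mat 1" by (metis prod3_three i0)
  qed
  have comm: "\<And>x y. \<iota> x ** \<iota> y = \<iota> y ** \<iota> x"
    by (metis hom add.commute)
  define e1 :: "3 \<times> 3" where "e1 = (1, 0)"
  define g1 where "g1 = \<iota> e1"
  define N where "N = g1 - mat 1"
  have N3: "N ** N ** N = 0" unfolding N_def g1_def by (rule cube_nil[OF c3 cube])
  have e1ne: "e1 \<noteq> 0" unfolding e1_def by (simp add: zero_prod_def)
  have N0: "N \<noteq> 0"
  proof
    assume "N = 0" hence "\<iota> e1 = \<iota> 0" unfolding N_def g1_def using i0 by simp
    thus False using inj e1ne by (meson injD)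
  qed
  have fixed: "\<And>g::'a^3^3. fixed_space g = {x. (g - mat 1) *v x = 0}"
    by (auto simp: fixed_space_def matrix_vector_mult_diff_rdistrib)
  have notpr: "\<And>y. \<not> pseudo_reflection (\<iota> y)" using sm unfolding small_def by auto
  have sqz: "\<And>y. \<iota> y - mat 1 \<noteq> 0 \<Longrightarrow> (\<iota> y - mat 1) ** (\<iota> y - mat 1) \<noteq> 0"
  proof -
    fix y assume a: "\<iota> y - mat 1 \<noteq> 0"
    show "(\<iota> y - mat 1) ** (\<iota> y - mat 1) \<noteq> 0"
    proof
      assume "(\<iota> y - mat 1) ** (\<iota> y - mat 1) = 0"
      hence "vec.dim (fixed_space (\<iota> y)) = 2" using kerdim[OF a] fixed by simp
      thus False using notpr[of y] unfolding pseudo_reflection_def by simp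
    qed
  qed
  have N2: "N ** N \<noteq> 0" using sqz[of e1] N0 unfolding N_def g1_def by simp
  obtain v where v: "(N ** N) *v v \<noteq> 0" using N2 matrix_eq[of "N ** N" 0] by auto
  define w1 where "w1 = N *v v"
  define w2 where "w2 = N *v w1"
  have Nv: "N *v v = w1" unfolding w1_def ..
  have Nw1: "N *v w1 = w2" unfolding w2_def ..
  have w2ne: "w2 \<noteq> 0" using v unfolding w2_def w1_def by (simp add: matrix_vector_mul_assoc)
  have Nw2: "N *v w2 = 0" using N3 unfolding w2_def w1_def by (simp add: matrix_vector_mul_assoc matrix_mul_assoc)
  define P :: "'a^3^3" where
    "P = (\<chi> i j. if j = 1 then - w2 $ i else if j = 2 then w1 $ i + w2 $ i else v $ i)"
  have Pz: "\<And>z. P *v z = z$1 *s (- w2) + z$2 *s (w1 + w2) + z$3 *s v"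
    unfolding P_def by (simp add: vec_eq_iff matrix_vector_mult_def sum_3 algebra_simps)
  have NP: "\<And>z. N *v (P *v z) = z$2 *s w2 + z$3 *s w1"
    unfolding Pz by (simp add: vec.add vec.diff vec.scale vec.neg Nv Nw1 Nw2)
  have Pinj: "\<And>z. P *v z = 0 \<Longrightarrow> z = 0"
  proof -
    fix z assume h: "P *v z = 0"
    have h1: "z$2 *s w2 + z$3 *s w1 = 0" using NP[of z] h by simp
    have "N *v (z$2 *s w2 + z$3 *s w1) = z$3 *s w2" by (simp add: vec.add vec.scale Nw1 Nw2)
    hence "z$3 *s w2 = 0" using h1 by simp
    hence z3: "z$3 = 0" using w2ne by simp
    hence z2: "z$2 = 0" using h1 w2ne by simp
    hence "z$1 = 0" using h z3 Pz[of z] w2ne by simp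
    thus "z = 0" using z3 z2 by (simp add: vec_eq_iff forall_3)
  qed
  have invP: "invertible P"
  proof -
    have "\<exists>B. B ** P = mat 1" unfolding matrix_left_invertible_ker using Pinj by blast
    then obtain B where B: "B ** P = mat 1" by blast
    hence "P ** B = mat 1" using matrix_left_right_inverse[of P B] by simp
    thus ?thesis unfolding invertible_def using B by blast
  qed
  define Pi where "Pi = matrix_inv P"
  have PPi: "P ** Pi = mat 1" and PiP: "Pi ** P = mat 1"
    using inv_props[OF invP] unfolding Pi_def by auto
  define T :: "'a^3^3" where "T = sigma (1,0) - mat 1"
  have Tz: "\<And>z. T *v z = vector [- z$2 + z$3, z$3, 0]"
    unfolding T_def sigma_def
    by (simp add: vec_eq_iff forall_3 matrix_vector_mult_def sum_3 mat_def)
  have NPT: "N ** P = P ** T"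
  proof -
    have "\<And>z. (N ** P) *v z = (P ** T) *v z"
    proof -
      fix z
      have "(N ** P) *v z = z$2 *s w2 + z$3 *s w1" using NP by (simp add: matrix_vector_mul_assoc[symmetric])
      also have "\<dots> = P *v (T *v z)" unfolding Pz Tz by (simp add: vec_eq_iff algebra_simps)
      also have "\<dots> = (P ** T) *v z" by (simp add: matrix_vector_mul_assoc)
      finally show "(N ** P) *v z = (P ** T) *v z" .
    qed
    thus ?thesis using matrix_eq by blast
  qed
  have TPi: "T = Pi ** N ** P"
  proof -
    have "Pi ** N ** P = Pi ** (P ** T)" using NPT by (simp add: matrix_mul_assoc[symmetric])
    also have "\<dots> = T" using PiP by (simp add: matrix_mul_assoc)
    finally show ?thesis by simp
  qed
  define M where "M y = Pi ** \<iota> y ** P" for y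
  have Nc: "\<And>y. \<iota> y ** N = N ** \<iota> y" unfolding N_def g1_def using comm by (simp add: msub_l msub_r)
  have MT: "\<And>y. M y ** T = T ** M y"
  proof -
    fix y
    have "M y ** T = Pi ** \<iota> y ** (P ** T)" unfolding M_def by (simp add: matrix_mul_assoc)
    also have "\<dots> = Pi ** (\<iota> y ** N) ** P" by (simp only: NPT[symmetric] matrix_mul_assoc)
    also have "\<dots> = Pi ** (N ** \<iota> y) ** P" using Nc by simp
    also have "\<dots> = Pi ** N ** (P ** Pi) ** \<iota> y ** P" by (simp only: PPi matrix_mul_rid matrix_mul_assoc)
    also have "\<dots> = (Pi ** N ** P) ** (Pi ** \<iota> y ** P)" by (simp add: matrix_mul_assoc)
    also have "\<dots> = T ** M y" using TPi M_def by simp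
    finally show "M y ** T = T ** M y" .
  qed
  have dPP: "det Pi * det P = 1" using PiP det_mul[of Pi P] det_I by simp
  have detM: "\<And>y. det (M y) = 1" unfolding M_def using dPP det1 by (simp add: det_mul)
  define cc where "cc y = M y $2$3" for y
  define dd where "dd y = M y $1$3 - (cc y)^2" for y
  have Msig: "\<And>y. M y = sigma (cc y, dd y)"
    unfolding cc_def dd_def using comm_sigma[OF c3] MT detM T_def by blast
  have ieq: "\<And>y. \<iota> y = P ** sigma (cc y, dd y) ** Pi"
  proof -
    fix y
    have "\<iota> y = (P ** Pi) ** \<iota> y ** (P ** Pi)" using PPi by simp
    also have "\<dots> = P ** M y ** Pi" unfolding M_def by (simp add: matrix_mul_assoc)
    finally show "\<iota> y = P ** sigma (cc y, dd y) ** Pi" using Msig by simp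
  qed
  have Mhom: "\<And>x y. M (x + y) = M x ** M y"
  proof -
    fix x y
    have "M (x + y) = Pi ** \<iota> x ** (P ** Pi) ** \<iota> y ** P" unfolding M_def hom[rule_format]
      by (simp only: PPi matrix_mul_rid matrix_mul_assoc)
    also have "\<dots> = M x ** M y" unfolding M_def by (simp add: matrix_mul_assoc)
    finally show "M (x + y) = M x ** M y" .
  qed
  have add: "\<And>x y. cc (x + y) = cc x + cc y \<and> dd (x + y) = dd x + dd y"
  proof -
    fix x y
    have "sigma (cc (x + y), dd (x + y)) = sigma (cc x + cc y, dd x + dd y)"
      using Mhom[of x y] Msig sigma_mult[OF c3] by metis
    thus "cc (x + y) = cc x + cc y \<and> dd (x + y) = dd x + dd y" using sigma_inj by blast
  qed
  have Me1: "M e1 = sigma (1, 0)"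
  proof -
    have "M e1 = Pi ** (N + mat 1) ** P" unfolding M_def N_def g1_def by simp
    also have "\<dots> = Pi ** N ** P + mat 1" using PiP by (simp add: matrix_add_ldistrib madd_r)
    also have "\<dots> = T + mat 1" using TPi by simp
    also have "\<dots> = sigma (1, 0)" unfolding T_def by simp
    finally show ?thesis .
  qed
  have ce1: "cc e1 = 1" "dd e1 = 0" using Me1 Msig[of e1] sigma_inj by metis+
  define a where "a = cc (0, 1)"
  define b where "b = dd (0, 1)"
  have a1: "\<And>s t. cc (s + t, 0) = cc (s, 0) + cc (t, 0)" "\<And>s t. cc (0, s + t) = cc (0, s) + cc (0, t)"
    "\<And>s t. dd (s + t, 0) = dd (s, 0) + dd (t, 0)" "\<And>s t. dd (0, s + t) = dd (0, s) + dd (0, t)"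
    using add by (metis add_Pair add_0)+
  have ccf: "\<And>i j. cc (of_int i, of_int j) = of_int i + of_int j * a"
   and ddf: "\<And>i j. dd (of_int i, of_int j) = of_int j * b"
  proof -
    fix i j :: int
    have sp: "((of_int i, of_int j)::3\<times>3) = (of_int i, 0) + (0, of_int j)" by simp
    have c1: "cc (of_int i, 0) = of_int i * cc (1, 0)"
      by (rule add_of_int[where \<phi>="\<lambda>s. cc (s, 0)"]) (rule a1(1))
    have c2: "cc (0, of_int j) = of_int j * cc (0, 1)"
      by (rule add_of_int[where \<phi>="\<lambda>s. cc (0, s)"]) (rule a1(2))
    have d1: "dd (of_int i, 0) = of_int i * dd (1, 0)"
      by (rule add_of_int[where \<phi>="\<lambda>s. dd (s, 0)"]) (rule a1(3))
    have d2: "dd (0, of_int j) = of_int j * dd (0, 1)"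
      by (rule add_of_int[where \<phi>="\<lambda>s. dd (0, s)"]) (rule a1(4))
    have s1: "cc (of_int i, of_int j) = cc (of_int i, 0) + cc (0, of_int j)"
      by (subst sp) (rule add[THEN conjunct1])
    have s2: "dd (of_int i, of_int j) = dd (of_int i, 0) + dd (0, of_int j)"
      by (subst sp) (rule add[THEN conjunct2])
    show "cc (of_int i, of_int j) = of_int i + of_int j * a"
      using s1 c1 c2 ce1 unfolding a_def e1_def by simp
    show "dd (of_int i, of_int j) = of_int j * b"
      using s2 d1 d2 ce1 unfolding b_def e1_def by simp
  qed
  have allof: "\<And>y::3\<times>3. \<exists>i j. y = (of_int i, of_int j)"
    by (metis three_of_int prod.collapse)
  have rng: "(\<lambda>S. P ** S ** Pi) ` sigma ` U a b = range \<iota>"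
  proof
    show "(\<lambda>S. P ** S ** Pi) ` sigma ` U a b \<subseteq> range \<iota>"
    proof
      fix X assume "X \<in> (\<lambda>S. P ** S ** Pi) ` sigma ` U a b"
      then obtain i j where X: "X = P ** sigma (of_int i + of_int j * a, of_int j * b) ** Pi"
        unfolding U_def by auto
      hence "X = \<iota> (of_int i, of_int j)" using ieq ccf ddf by simp
      thus "X \<in> range \<iota>" by simp
    qed
  next
    show "range \<iota> \<subseteq> (\<lambda>S. P ** S ** Pi) ` sigma ` U a b"
    proof
      fix X assume "X \<in> range \<iota>"
      then obtain y where "X = \<iota> y" by auto
      moreover obtain i j where "y = (of_int i, of_int j)" using allof by blast
      ultimately have "X = P ** sigma (of_int i + of_int j * a, of_int j * b) ** Pi"
        using ieq ccf ddf by simp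
      moreover have "(of_int i + of_int j * a, of_int j * b) \<in> U a b" unfolding U_def by blast
      ultimately show "X \<in> (\<lambda>S. P ** S ** Pi) ` sigma ` U a b" by blast
    qed
  qed
  have anot: "a \<notin> prime_subfield"
  proof
    assume "a \<in> prime_subfield"
    then obtain k where k: "a = of_int k" unfolding prime_subfield_def by auto
    define y :: "3\<times>3" where "y = (of_int k, of_int (-1))"
    have cy: "cc y = 0" unfolding y_def using ccf[of k "-1"] k by simp
    have yne: "y \<noteq> 0" unfolding y_def by (simp add: zero_prod_def)
    have iy: "\<iota> y \<noteq> mat 1" using yne i0 inj by (metis injD)
    define E :: "'a^3^3" where "E = sigma (0, dd y) - mat 1"
    have EE: "E ** E = 0" unfolding E_def sigma_def
      by (simp add: vec_eq_iff forall_3 matrix_matrix_mult_def sum_3 mat_def)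
    have K: "\<iota> y - mat 1 = P ** E ** Pi"
    proof -
      have "P ** E ** Pi = P ** sigma (0, dd y) ** Pi - P ** mat 1 ** Pi"
        unfolding E_def by (simp add: msub_l msub_r)
      thus ?thesis using ieq[of y] cy PPi by simp
    qed
    have "(\<iota> y - mat 1) ** (\<iota> y - mat 1) = P ** E ** (Pi ** P) ** E ** Pi"
      unfolding K by (simp add: matrix_mul_assoc)
    also have "\<dots> = P ** (E ** E) ** Pi" using PiP by (simp add: matrix_mul_assoc)
    also have "\<dots> = 0" using EE by simp
    finally show False using sqz[of y] iy by simp
  qed
  have GL: "Pi \<in> GL3" unfolding GL3_def Pi_def using inv_inv(1)[OF invP] by simp
  have mi: "matrix_inv Pi = P" unfolding Pi_def using inv_inv(2)[OF invP] .
  show ?thesis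
    unfolding conjugate_in_GL3_def using anot GL mi rng by metis
qed
end
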